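(* Let $R$ be a GSWNC ring and let $e \in R$ be a non-zero idempotent. Then the corner ring $eRe$ is a GSWNC ring.
   Context: All rings are associative with identity; $eRe$ has identity $e$. An element $a$ of a ring is strongly weakly nil-clean if there exist an idempotent $f$ and a nilpotent $q$ with $fq = qf$ such that $a = q + f$ or $a = q - f$. A ring is GSWNC if every non-invertible element is strongly weakly nil-clean. *)

theory Defs
  imports "HOL-Algebra.Ring"
begin

definition swnc_elem :: "('a, 'b) ring_scheme \<Rightarrow> 'a \<Rightarrow> bool" where
  "swnc_elem R a \<longleftrightarrow>
     (\<exists>f \<in> carrier R. \<exists>q \<in> carrier R.
        f \<otimes>\<^bsub>R\<^esub> f = f \<and>
        (\<exists>n::nat. q [^]\<^bsub>R\<^esub> n = \<zero>\<^bsub>R\<^esub>) \<and>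
        f \<otimes>\<^bsub>R\<^esub> q = q \<otimes>\<^bsub>R\<^esub> f \<and>
        (a = q \<oplus>\<^bsub>R\<^esub> f \<or> a = q \<ominus>\<^bsub>R\<^esub> f))"

definition GSWNC :: "('a, 'b) ring_scheme \<Rightarrow> bool" where
  "GSWNC R \<longleftrightarrow> ring R \<and> (\<forall>a \<in> carrier R - Units R. swnc_elem R a)"

definition corner :: "('a, 'b) ring_scheme \<Rightarrow> 'a \<Rightarrow> 'a ring" where
  "corner R e = \<lparr>carrier = (\<lambda>x. e \<otimes>\<^bsub>R\<^esub> x \<otimes>\<^bsub>R\<^esub> e) ` carrier R,
                 monoid.mult = monoid.mult R, one = e,
                 zero = \<zero>\<^bsub>R\<^esub>, add = add R\<rparr>"

end

theory Submission
  imports Defs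
begin


lemma (in ring) nil_l:
  assumes q: "q \<in> carrier R" and x: "x \<in> carrier R" and n: "q [^] (n::nat) = \<zero>"
    and h: "x \<otimes> (\<one> \<oplus> q) = \<zero>"
  shows "x = \<zero>"
proof -
  have xq: "x \<otimes> q = \<ominus> x"
    using h q x by (metis add.inv_closed add.inv_solve_right m_closed one_closed r_distr r_one r_zero zero_closed l_zero)
  have "\<And>k. x \<otimes> q [^] (k::nat) = x \<or> x \<otimes> q [^] k = \<ominus> x"
  proof -
    fix k show "x \<otimes> q [^] (k::nat) = x \<or> x \<otimes> q [^] k = \<ominus> x"
    proof (induction k)
      case 0 then show ?case using x by simp
    next
      case (Suc k)
      have "x \<otimes> q [^] Suc k = (x \<otimes> q [^] k) \<otimes> q" using q x by (simp add: m_assoc)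
      then show ?case using Suc xq q x by (auto simp: l_minus)
    qed
  qed
  from this[of n] have "\<zero> = x \<or> \<zero> = \<ominus> x" using n x by simp
  then show ?thesis using x by (metis minus_minus minus_zero)
qed

lemma (in ring) nil_r:
  assumes q: "q \<in> carrier R" and x: "x \<in> carrier R" and n: "q [^] (n::nat) = \<zero>"
    and h: "(\<one> \<oplus> q) \<otimes> x = \<zero>"
  shows "x = \<zero>"
proof -
  have xq: "q \<otimes> x = \<ominus> x"
    using h q x by (metis add.inv_closed add.inv_solve_right m_closed one_closed l_distr l_one r_zero zero_closed l_zero)
  have "\<And>k. q [^] (k::nat) \<otimes> x = x \<or> q [^] k \<otimes> x = \<ominus> x"
  proof -
    fix k show "q [^] (k::nat) \<otimes> x = x \<or> q [^] k \<otimes> x = \<ominus> x"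
    proof (induction k)
      case 0 then show ?case using x by simp
    next
      case (Suc k)
      have "q [^] Suc k \<otimes> x = q [^] k \<otimes> (q \<otimes> x)" using q x by (simp del: nat_pow_Suc add: m_assoc nat_pow_Suc2)
      hence "q [^] Suc k \<otimes> x = \<ominus> (q [^] k \<otimes> x)" using xq q x by (simp add: r_minus)
      then show ?case using Suc q x by auto
    qed
  qed
  from this[of n] have "\<zero> = x \<or> \<zero> = \<ominus> x" using n x by simp
  then show ?thesis using x by (metis minus_minus minus_zero)
qed

lemma (in ring) dc:
  assumes a: "a \<in> carrier R" and b: "b \<in> carrier R" and f: "f \<in> carrier R" and q: "q \<in> carrier R"
    and ff: "f \<otimes> f = f" and n: "q [^] (n::nat) = \<zero>" and fq: "f \<otimes> q = q \<otimes> f"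
    and aq: "a = q \<oplus> f" and ab: "a \<otimes> b = b \<otimes> a"
  shows "f \<otimes> b = b \<otimes> f"
proof -
  define g where "g = \<one> \<ominus> f"
  have g: "g \<in> carrier R" unfolding g_def using f by simp
  have gf: "g \<otimes> f = \<zero>" unfolding g_def using f ff
    by (simp add: a_minus_def l_distr l_minus r_neg)
  have fg: "f \<otimes> g = \<zero>" unfolding g_def using f ff
    by (simp add: a_minus_def r_distr r_minus r_neg)
  have fpg: "f \<oplus> g = \<one>" unfolding g_def using f
    by (metis a_minus_def add.m_lcomm add.inv_closed one_closed r_neg r_zero)
  have af: "a \<otimes> f = f \<otimes> a" using aq f q ff fq by (simp add: l_distr r_distr)
  have ag: "a \<otimes> g = g \<otimes> a" unfolding g_def using a f af
    by (simp add: a_minus_def l_distr r_distr l_minus r_minus)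
  define x where "x = g \<otimes> b \<otimes> f"
  have x: "x \<in> carrier R" unfolding x_def using g b f by simp
  have "a \<otimes> x = x \<otimes> a" unfolding x_def using a b f g ab af ag
    by (metis m_assoc m_closed)
  moreover have "a \<otimes> x = q \<otimes> x" unfolding x_def aq using q f g b fg
    by (simp add: l_distr m_assoc[symmetric] l_null)
  moreover have "x \<otimes> a = x \<oplus> x \<otimes> q" unfolding x_def aq using q f g b ff
    by (simp add: r_distr m_assoc a_comm)
  ultimately have qx: "q \<otimes> x = x \<otimes> (\<one> \<oplus> q)" using x q by (simp add: r_distr)
  have pk: "q [^] k \<otimes> x = x \<otimes> (\<one> \<oplus> q) [^] k" for k :: nat
  proof (induction k)
    case 0 then show ?case using x by simp
  next
    case (Suc k)
    have "q [^] Suc k \<otimes> x = q [^] k \<otimes> (q \<otimes> x)" using q x by (simp add: m_assoc)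
    also have "\<dots> = x \<otimes> (\<one> \<oplus> q) [^] k \<otimes> (\<one> \<oplus> q)" using qx Suc q x
      by (simp add: m_assoc[symmetric])
    finally show ?case using q x by (simp add: m_assoc)
  qed
  have zk: "z \<in> carrier R \<Longrightarrow> z \<otimes> (\<one> \<oplus> q) [^] k = \<zero> \<Longrightarrow> z = \<zero>" for z and k :: nat
  proof (induction k arbitrary: z)
    case 0 then show ?case by simp
  next
    case (Suc k)
    have "(z \<otimes> (\<one> \<oplus> q) [^] k) \<otimes> (\<one> \<oplus> q) = \<zero>" using Suc.prems q by (simp add: m_assoc)
    then have "z \<otimes> (\<one> \<oplus> q) [^] k = \<zero>" using nil_l[OF q _ n] Suc.prems q by simp
    then show ?case using Suc by blast
  qed
  have x0: "x = \<zero>" using zk[OF x, of n] pk[of n] n x by simp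
  define y where "y = f \<otimes> b \<otimes> g"
  have y: "y \<in> carrier R" unfolding y_def using g b f by simp
  have "a \<otimes> y = y \<otimes> a" unfolding y_def using a b f g ab af ag
    by (metis m_assoc m_closed)
  moreover have "y \<otimes> a = y \<otimes> q" unfolding y_def aq using q f g b gf
    by (simp add: r_distr m_assoc r_null)
  moreover have "a \<otimes> y = q \<otimes> y \<oplus> y" unfolding y_def aq using q f g b ff
    by (simp add: l_distr m_assoc[symmetric])
  ultimately have qy: "(\<one> \<oplus> q) \<otimes> y = y \<otimes> q" using y q by (simp add: l_distr a_comm)
  have pk2: "(\<one> \<oplus> q) [^] k \<otimes> y = y \<otimes> q [^] k" for k :: nat
  proof (induction k)
    case 0 then show ?case using y by simp
  next
    case (Suc k)
    have "(\<one> \<oplus> q) [^] Suc k \<otimes> y = (\<one> \<oplus> q) \<otimes> ((\<one> \<oplus> q) [^] k \<otimes> y)" using q y by (metis m_assoc nat_pow_Suc2 nat_pow_closed add.m_closed one_closed)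
    also have "\<dots> = y \<otimes> q \<otimes> q [^] k" using qy Suc q y
      by (simp add: m_assoc[symmetric])
    finally show ?case using q y by (metis m_assoc nat_pow_Suc2 nat_pow_closed add.m_closed one_closed)
  qed
  have zk2: "z \<in> carrier R \<Longrightarrow> (\<one> \<oplus> q) [^] k \<otimes> z = \<zero> \<Longrightarrow> z = \<zero>" for z and k :: nat
  proof (induction k arbitrary: z)
    case 0 then show ?case by simp
  next
    case (Suc k)
    have "(\<one> \<oplus> q) \<otimes> ((\<one> \<oplus> q) [^] k \<otimes> z) = \<zero>" using Suc.prems q by (metis m_assoc nat_pow_Suc2 nat_pow_closed add.m_closed one_closed)
    then have "(\<one> \<oplus> q) [^] k \<otimes> z = \<zero>" using nil_r[OF q _ n] Suc.prems q by simp
    then show ?case using Suc by blast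
  qed
  have y0: "y = \<zero>" using zk2[OF y, of n] pk2[of n] n y by simp
  have "b \<otimes> f = (f \<oplus> g) \<otimes> b \<otimes> f" using fpg b by simp
  also have "\<dots> = f \<otimes> b \<otimes> f" using x0 f g b unfolding x_def by (simp add: l_distr)
  also have "\<dots> = f \<otimes> b \<otimes> (f \<oplus> g)" using y0 f g b unfolding y_def by (simp add: r_distr)
  also have "\<dots> = f \<otimes> b" using fpg f b by simp
  finally show ?thesis by simp
qed

lemma corner_simps:
  "mult (corner R e) = mult R" "one (corner R e) = e" "zero (corner R e) = zero R"
  "add (corner R e) = add R" "carrier (corner R e) = (\<lambda>x. e \<otimes>\<^bsub>R\<^esub> x \<otimes>\<^bsub>R\<^esub> e) ` carrier R"
  by (simp_all add: corner_def)

lemma (in ring) corner_mem: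
  assumes e: "e \<in> carrier R" "e \<otimes> e = e"
  shows "y \<in> carrier (corner R e) \<longleftrightarrow> y \<in> carrier R \<and> e \<otimes> y = y \<and> y \<otimes> e = y"
proof
  assume "y \<in> carrier (corner R e)"
  then obtain z where z: "z \<in> carrier R" "y = e \<otimes> z \<otimes> e" by (auto simp: corner_simps)
  then show "y \<in> carrier R \<and> e \<otimes> y = y \<and> y \<otimes> e = y" using e
    by (simp add: m_assoc[symmetric]) (simp add: m_assoc)
next
  assume "y \<in> carrier R \<and> e \<otimes> y = y \<and> y \<otimes> e = y"
  then have "y = e \<otimes> y \<otimes> e" "y \<in> carrier R" by auto
  then show "y \<in> carrier (corner R e)" by (auto simp: corner_simps)
qed

lemma (in ring) corner_carrier:
  assumes e: "e \<in> carrier R" "e \<otimes> e = e"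
  shows "carrier (corner R e) = {y \<in> carrier R. e \<otimes> y = y \<and> y \<otimes> e = y}"
  using corner_mem[OF e] by blast

lemma (in ring) corner_ring:
  assumes e: "e \<in> carrier R" "e \<otimes> e = e"
  shows "ring (corner R e)"
proof (rule ringI)
  note cc = corner_carrier[OF e] corner_simps(1-4)
  show "abelian_group (corner R e)"
    apply (rule abelian_groupI)
    apply (simp_all add: cc)
    using e apply (simp add: l_distr r_distr)
    using e apply simp
    apply (simp add: a_assoc)
    apply (simp add: a_comm)
    using e apply (metis l_minus r_minus l_neg add.inv_closed)
    done
  show "monoid (corner R e)"
    apply (rule monoidI)
    apply (simp_all only: cc mem_Collect_eq)
    using e apply (metis m_assoc m_closed)
    using e apply simp
    apply (meson m_assoc)
    done
  fix x y z assume "x \<in> carrier (corner R e)" "y \<in> carrier (corner R e)" "z \<in> carrier (corner R e)"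
  then have "x \<in> carrier R" "y \<in> carrier R" "z \<in> carrier R" by (simp_all add: cc)
  then show "(x \<oplus>\<^bsub>corner R e\<^esub> y) \<otimes>\<^bsub>corner R e\<^esub> z = x \<otimes>\<^bsub>corner R e\<^esub> z \<oplus>\<^bsub>corner R e\<^esub> y \<otimes>\<^bsub>corner R e\<^esub> z"
    "z \<otimes>\<^bsub>corner R e\<^esub> (x \<oplus>\<^bsub>corner R e\<^esub> y) = z \<otimes>\<^bsub>corner R e\<^esub> x \<oplus>\<^bsub>corner R e\<^esub> z \<otimes>\<^bsub>corner R e\<^esub> y"
    by (simp_all only: corner_simps(1-4), simp_all add: l_distr r_distr)
qed

lemma (in ring) pow_comm:
  assumes "e \<in> carrier R" "q \<in> carrier R" "e \<otimes> q = q \<otimes> e"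
  shows "e \<otimes> q [^] (k::nat) = q [^] k \<otimes> e"
proof (induction k)
  case 0 then show ?case using assms by simp
next
  case (Suc k)
  have "e \<otimes> q [^] Suc k = (e \<otimes> q [^] k) \<otimes> q" using assms by (simp add: m_assoc)
  also have "\<dots> = q [^] k \<otimes> (e \<otimes> q)" using Suc assms by (simp add: m_assoc)
  also have "\<dots> = q [^] Suc k \<otimes> e" using assms by (simp add: m_assoc)
  finally show ?case .
qed

lemma (in ring) corner_pow:
  assumes e: "e \<in> carrier R" "e \<otimes> e = e" and q: "q \<in> carrier R" "e \<otimes> q = q \<otimes> e"
  shows "(e \<otimes> q) [^]\<^bsub>corner R e\<^esub> (Suc k) = e \<otimes> q [^] (Suc k)"
proof (induction k)
  case 0 then show ?case using e q by (simp add: corner_simps, metis m_assoc)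
next
  case (Suc k)
  have "(e \<otimes> q) [^]\<^bsub>corner R e\<^esub> (Suc (Suc k)) = (e \<otimes> q [^] (Suc k)) \<otimes> (e \<otimes> q)"
    using Suc by (simp only: Group.nat_pow_Suc[where G="corner R e" and n="Suc k"] corner_simps)
  also have "\<dots> = e \<otimes> (q [^] (Suc k) \<otimes> e) \<otimes> q" using e q by (simp add: m_assoc del: nat_pow_Suc)
  also have "\<dots> = e \<otimes> q [^] (Suc (Suc k))" using e q pow_comm[of e q "Suc k"]
    by (simp add: m_assoc[symmetric] del: nat_pow_Suc) (simp add: m_assoc)
  finally show ?case .
qed



lemma (in ring) swap_mid:
  assumes c: "a \<in> carrier R" "b \<in> carrier R" "c \<in> carrier R" "d \<in> carrier R"
    and bc: "b \<otimes> c = c \<otimes> b"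
  shows "a \<otimes> b \<otimes> (c \<otimes> d) = a \<otimes> c \<otimes> (b \<otimes> d)"
proof -
  have "a \<otimes> b \<otimes> (c \<otimes> d) = a \<otimes> ((b \<otimes> c) \<otimes> d)" using c by (simp add: m_assoc)
  also have "\<dots> = a \<otimes> ((c \<otimes> b) \<otimes> d)" using bc by simp
  also have "\<dots> = a \<otimes> c \<otimes> (b \<otimes> d)" using c by (simp add: m_assoc)
  finally show ?thesis .
qed

lemma (in ring) main:
  assumes swR: "\<And>x. x \<in> carrier R - Units R \<Longrightarrow> swnc_elem R x"
    and e: "e \<in> carrier R" "e \<otimes> e = e"
  shows "GSWNC (corner R e)"
proof -
  let ?C = "corner R e"
  interpret C: ring ?C using corner_ring[OF e] .
  note cc = corner_carrier[OF e]
  have ee: "\<And>y. y \<in> carrier R \<Longrightarrow> e \<otimes> (e \<otimes> y) = e \<otimes> y" using e by (simp add: m_assoc[symmetric])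
  have "swnc_elem ?C a" if a: "a \<in> carrier ?C - Units ?C" for a
  proof -
    have aR: "a \<in> carrier R" "e \<otimes> a = a" "a \<otimes> e = a" using a cc by auto
    define x where "x = a \<oplus> (\<one> \<ominus> e)"
    have xR: "x \<in> carrier R" unfolding x_def using aR e by simp
    have e1: "e \<otimes> (\<one> \<ominus> e) = \<zero>" "(\<one> \<ominus> e) \<otimes> e = \<zero>" using e
      by (simp_all add: a_minus_def l_distr r_distr l_minus r_minus r_neg)
    have ex: "e \<otimes> x = a" "x \<otimes> e = a" unfolding x_def using e aR e1
      by (simp_all add: l_distr r_distr)
    have "x \<notin> Units R"
    proof
      assume "x \<in> Units R"
      then obtain u where u: "u \<in> carrier R" "u \<otimes> x = \<one>" "x \<otimes> u = \<one>" by (auto simp: Units_def)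
      have "u \<otimes> e = u \<otimes> e \<otimes> (x \<otimes> u)" using u e by simp
      also have "\<dots> = u \<otimes> (e \<otimes> x) \<otimes> u" using u e xR by (simp add: m_assoc)
      also have "\<dots> = u \<otimes> (x \<otimes> e) \<otimes> u" using ex by simp
      also have "\<dots> = e \<otimes> u" using u e xR by (simp add: m_assoc[symmetric])
      finally have eu: "u \<otimes> e = e \<otimes> u" .
      define v where "v = e \<otimes> u \<otimes> e"
      have vC: "v \<in> carrier ?C" unfolding v_def cc using e u
        by (simp add: m_assoc) (simp add: m_assoc[symmetric])
      have "a \<otimes> v = x \<otimes> (e \<otimes> e) \<otimes> u \<otimes> e" unfolding v_def using ex(2)[symmetric] e u xR
        by (simp add: m_assoc ee)
      also have "\<dots> = x \<otimes> (e \<otimes> u) \<otimes> e" using e u xR by (simp add: m_assoc)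
      also have "\<dots> = x \<otimes> (u \<otimes> e) \<otimes> e" using eu by simp
      also have "\<dots> = (x \<otimes> u) \<otimes> (e \<otimes> e)" using e(1) u(1) xR by (simp only: m_assoc m_closed)
      finally have av: "a \<otimes> v = e" using u e by simp
      have "v \<otimes> a = e \<otimes> u \<otimes> (e \<otimes> e) \<otimes> x" unfolding v_def using ex(1)[symmetric] e u xR
        by (simp add: m_assoc ee)
      also have "\<dots> = e \<otimes> (u \<otimes> e) \<otimes> x" using e u xR by (simp add: m_assoc)
      also have "\<dots> = e \<otimes> (e \<otimes> u) \<otimes> x" using eu by simp
      also have "\<dots> = (e \<otimes> e) \<otimes> (u \<otimes> x)" using e(1) u(1) xR by (simp only: m_assoc m_closed)
      finally have va: "v \<otimes> a = e" using u e by simp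
      from av va have "a \<in> Units ?C" using vC a by (auto simp: Units_def corner_simps)
      then show False using a by simp
    qed
    then obtain f q n where f: "f \<in> carrier R" and q: "q \<in> carrier R" and ff: "f \<otimes> f = f"
      and qn: "q [^] (n::nat) = \<zero>" and fq: "f \<otimes> q = q \<otimes> f"
      and xd: "x = q \<oplus> f \<or> x = q \<ominus> f"
      using swR[of x] xR unfolding swnc_elem_def by blast
    have fe: "f \<otimes> e = e \<otimes> f"
    proof (cases "x = q \<oplus> f")
      case True
      show ?thesis using dc[OF xR e(1) f q ff qn fq True] ex by simp
    next
      case False
      then have xm: "x = q \<ominus> f" using xd by simp
      have nq: "\<ominus> q = \<ominus> \<one> \<otimes> q" using q by (simp add: l_minus)
      have "(\<ominus> q) [^] n = (\<ominus> \<one>) [^] n \<otimes> q [^] n" unfolding nq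
        using q by (intro pow_mult_distrib) (simp_all add: l_minus r_minus)
      hence nqn: "(\<ominus> q) [^] n = \<zero>" using qn q by simp
      have "\<ominus> x = (\<ominus> q) \<oplus> f" unfolding xm using q f by (simp add: a_minus_def minus_add)
      moreover have "(\<ominus> x) \<otimes> e = e \<otimes> (\<ominus> x)" using ex xR e by (simp add: l_minus r_minus)
      moreover have "f \<otimes> (\<ominus> q) = (\<ominus> q) \<otimes> f" using fq f q by (simp add: l_minus r_minus)
      ultimately show ?thesis using dc[of "\<ominus> x" e f "\<ominus> q"] xR e f q ff nqn by simp
    qed
    have qe: "q \<otimes> e = e \<otimes> q"
    proof -
      have "e \<otimes> x = x \<otimes> e" using ex by simp
      then have "e \<otimes> q \<oplus> e \<otimes> f = q \<otimes> e \<oplus> f \<otimes> e \<or> e \<otimes> q \<ominus> e \<otimes> f = q \<otimes> e \<ominus> f \<otimes> e"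
        using xd e q f by (auto simp: l_distr r_distr a_minus_def l_minus r_minus)
      then show ?thesis using fe e q f
        by (metis add.right_cancel a_minus_def add.inv_closed m_closed)
    qed
    define f' where "f' = e \<otimes> f"
    define q' where "q' = e \<otimes> q"
    have f'C: "f' \<in> carrier ?C" unfolding cc f'_def using e f fe
      by (simp add: m_assoc ee)
    have q'C: "q' \<in> carrier ?C" unfolding cc q'_def using e q qe
      by (simp add: m_assoc ee)
    have "f' \<otimes>\<^bsub>?C\<^esub> f' = f'" unfolding f'_def corner_simps using e f fe ff
      by (simp only: swap_mid[OF e(1) f e(1) f fe])
    moreover have "q' [^]\<^bsub>?C\<^esub> (Suc n) = \<zero>\<^bsub>?C\<^esub>" unfolding q'_def corner_pow[OF e q qe[symmetric]]
      using qn e q by (simp add: corner_simps)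
    moreover have "f' \<otimes>\<^bsub>?C\<^esub> q' = q' \<otimes>\<^bsub>?C\<^esub> f'" unfolding f'_def q'_def corner_simps
      using e f q fe qe fq
      by (simp only: swap_mid[OF e(1) f e(1) q fe] swap_mid[OF e(1) q e(1) f qe])
    moreover have "a = q' \<oplus>\<^bsub>?C\<^esub> f' \<or> a = q' \<ominus>\<^bsub>?C\<^esub> f'"
    proof -
      have mf: "\<ominus>\<^bsub>?C\<^esub> f' = \<ominus> f'"
      proof (rule C.minus_equality)
        show "\<ominus> f' \<oplus>\<^bsub>?C\<^esub> f' = \<zero>\<^bsub>?C\<^esub>" using f'C cc by (simp add: corner_simps l_neg)
        show "f' \<in> carrier ?C" by (rule f'C)
        show "\<ominus> f' \<in> carrier ?C" using f'C cc e by (simp add: l_minus r_minus)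
      qed
      have "a = e \<otimes> x" using ex by simp
      then show ?thesis using xd e q f unfolding f'_def q'_def
        by (auto simp: corner_simps a_minus_def[of ?C] mf[unfolded f'_def] a_minus_def r_distr r_minus)
    qed
    ultimately show ?thesis unfolding swnc_elem_def using f'C q'C by blast
  qed
  then show ?thesis unfolding GSWNC_def using C.ring_axioms by blast
qed

theorem lemma2p14:
  fixes R :: "('a, 'b) ring_scheme" and e :: 'a
  assumes "GSWNC R"
    and "e \<in> carrier R"
    and "e \<otimes>\<^bsub>R\<^esub> e = e"
    and "e \<noteq> \<zero>\<^bsub>R\<^esub>"
  shows "GSWNC (corner R e)"
  using ring.main[of R e] assms unfolding GSWNC_def by blast

end
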